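(* Let $L$ be the infinite matrix with entries $L_{i,j}=l_{i,j}$ for $i\ge j\ge0$ and $L_{i,j}=0$ for $j>i$, let $M$ be the infinite matrix with entries $M_{i,j}=l_{i+j,j}$ ($i,j\ge0$), and let $U$ be the infinite upper-triangular matrix with entries $U_{i,j}=\binom{j}{i}$ ($i,j\geq0$). Then $M=LU$ (the product being well defined since each entry is a finite sum). In particular, for every $n\ge1$, the square matrix $M(n)$ formed by the first $n$ rows and columns of $M$ satisfies $\det M(n)=1$.
   Context: For $i,j\in\mathbb N$ with $j\le i$, $l_{i,j}=\sum_{k=0}^{i-j}\binom{\frac{i-1}{2}+x-k}{k}\binom{\frac{i-1}{2}+k-x}{i-j-k}$, where $\binom{z}{k}=\frac{z(z-1)\cdots(z-k+1)}{k!}$; this sum is a polynomial in $x$ which is constant in $x$, so $l_{i,j}$ is a well-defined number (e.g. its value at $x=0$). These numbers form a Pascal-like triangle starting with rows $1$; $-1,1$; $1,0,1$; $-1,1,1,1$; $1,0,2,2,1$. *)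

theory Defs
  imports Complex_Main "Jordan_Normal_Form.Determinant"
begin

definition lpoly :: "nat \<Rightarrow> nat \<Rightarrow> real \<Rightarrow> real" where
  "lpoly i j x = (\<Sum>k = 0..i - j.
      (((real i - 1) / 2 + x - real k) gchoose k) *
      (((real i - 1) / 2 + real k - x) gchoose (i - j - k)))"

text \<open>l i j is the (constant) value of that polynomial, taken at x = 0.\<close>
definition lcoef :: "nat \<Rightarrow> nat \<Rightarrow> real" where
  "lcoef i j = lpoly i j 0"

definition Lmat :: "nat \<Rightarrow> nat \<Rightarrow> real" where
  "Lmat i j = (if j \<le> i then lcoef i j else 0)"

definition Mmat :: "nat \<Rightarrow> nat \<Rightarrow> real" where
  "Mmat i j = lcoef (i + j) j"

definition Umat :: "nat \<Rightarrow> nat \<Rightarrow> real" where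
  "Umat i j = real (j choose i)"

end

theory Submission imports Defs "HOL-Computational_Algebra.Formal_Power_Series" begin

definition bc :: "real \<Rightarrow> int \<Rightarrow> real" where
  "bc z n = (if n < 0 then 0 else z gchoose nat n)"

definition G :: "real \<Rightarrow> int \<Rightarrow> real \<Rightarrow> real" where
  "G s m u = (\<Sum>k\<in>{0..m}. bc (u - of_int k) k * bc (s - u + of_int k) (m - k))"

lemma bc_neg[simp]: "n < 0 \<Longrightarrow> bc z n = 0" by (simp add: bc_def)
lemma bc_0[simp]: "bc z 0 = 1" by (simp add: bc_def)

lemma bc_pascal: "bc (z + 1) n = bc z n + bc z (n - 1)"
proof (cases "n \<le> 0")
  case True then show ?thesis by (cases "n = 0") auto
next
  case False
  then have "nat n = Suc (nat (n - 1))" by simp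
  then show ?thesis using False by (simp add: bc_def gbinomial_Suc_Suc)
qed

lemma sum_int_shift: "(\<Sum>k\<in>{a..b::int}. f k) = (\<Sum>k\<in>{a-c..b-c}. f (k + c))"
  by (rule sum.reindex_bij_witness[of _ "\<lambda>k. k + c" "\<lambda>k. k - c"]) auto

lemma G_ext: assumes "a \<le> 0" "m \<le> b"
  shows "G s m u = (\<Sum>k\<in>{a..b}. bc (u - of_int k) k * bc (s - u + of_int k) (m - k))"
  unfolding G_def
  by (rule sum.mono_neutral_right[symmetric]) (use assms in auto)

lemma G_0: "G s 0 u = 1" by (simp add: G_def)

lemma G_rec: "G s (m+1) (u+1) = G s (m+1) u + G s m (u-1) - G s m (u+1)"
proof -
  let ?X = "\<lambda>k. bc (u - of_int k) k * bc (s - u + of_int k) (m + 1 - k)"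
  let ?Y = "\<lambda>k. bc (u - of_int k) (k - 1) * bc (s - u + of_int k) (m + 1 - k)"
  let ?Z = "\<lambda>k. bc (u + 1 - of_int k) k * bc (s - (u + 1) + of_int k) (m - k)"
  have T: "bc (u + 1 - of_int k) k * bc (s - (u + 1) + of_int k) (m + 1 - k) = ?X k + ?Y k - ?Z k" for k
  proof -
    have 1: "bc (u + 1 - of_int k) k = bc (u - of_int k) k + bc (u - of_int k) (k - 1)"
      using bc_pascal[of "u - of_int k" k] by (simp add: algebra_simps)
    have 2: "bc (s - u + of_int k) (m + 1 - k) = bc (s - (u + 1) + of_int k) (m + 1 - k) + bc (s - (u + 1) + of_int k) (m - k)"
      using bc_pascal[of "s - (u + 1) + of_int k" "m + 1 - k"] by (simp add: algebra_simps)
    show ?thesis unfolding 1 using 2 by (simp add: algebra_simps)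
  qed
  have "G s (m+1) (u+1) = (\<Sum>k\<in>{-1..m+1}. bc (u + 1 - of_int k) k * bc (s - (u + 1) + of_int k) (m + 1 - k))"
    by (rule G_ext) auto
  also have "\<dots> = (\<Sum>k\<in>{-1..m+1}. ?X k) + (\<Sum>k\<in>{-1..m+1}. ?Y k) - (\<Sum>k\<in>{-1..m+1}. ?Z k)"
    unfolding T by (simp add: sum.distrib sum_subtractf)
  also have "(\<Sum>k\<in>{-1..m+1}. ?X k) = G s (m+1) u"
    by (rule G_ext[symmetric]) auto
  also have "(\<Sum>k\<in>{-1..m+1}. ?Z k) = G s m (u+1)"
    by (rule G_ext[symmetric]) auto
  also have "(\<Sum>k\<in>{-1..m+1}. ?Y k) = (\<Sum>k\<in>{-2..m}. ?Y (k + 1))"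
    using sum_int_shift[of ?Y "-1" "m+1" 1] by simp
  also have "\<dots> = (\<Sum>k\<in>{-2..m}. bc (u - 1 - of_int k) k * bc (s - (u - 1) + of_int k) (m - k))"
    by (rule sum.cong) (auto simp: algebra_simps)
  also have "\<dots> = G s m (u - 1)"
    by (rule G_ext[symmetric]) auto
  finally show ?thesis by simp
qed

lemma G_shift1: "G s (int m) (u + 1) = G s (int m) u"
proof (induction m arbitrary: u)
  case 0 then show ?case by (simp add: G_0)
next
  case (Suc m)
  have a: "G s (int m) (u - 1) = G s (int m) u" using Suc[of "u - 1"] by simp
  show ?case using G_rec[of s "int m" u] a Suc[of u] by (simp add: add.commute)
qed

lemma G_neg: "m < 0 \<Longrightarrow> G s m u = 0" by (simp add: G_def)

lemma G_shift1': "G s m (u + 1) = G s m u"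
  using G_shift1[of s "nat m" u] by (cases "m < 0") (auto simp: G_neg)

lemma G_shift_nat: "G s m (u + real n) = G s m u"
proof (induction n)
  case (Suc n)
  have "u + real (Suc n) = (u + real n) + 1" by simp
  then show ?case using Suc G_shift1'[of s m "u + real n"] by metis
qed simp

lemma bc_poly: "\<exists>p. \<forall>u. bc (c + e * u) n = poly p u"
proof (cases "n < 0")
  case True then show ?thesis by (intro exI[of _ 0]) simp
next
  case False
  define p where "p = smult (1 / fact (nat n)) (\<Prod>i=0..<nat n. [:c - of_nat i, e:])"
  have "bc (c + e * u) n = poly p u" for u
    using False by (simp add: bc_def p_def gbinomial_prod_rev poly_prod algebra_simps)
  then show ?thesis by blast
qed

lemma poly_sum_ex:
  assumes "\<And>k. \<exists>p. \<forall>u. f k u = poly p u"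
  shows "\<exists>p. \<forall>u. (\<Sum>k\<in>A. f k u) = poly p u"
proof -
  from assms obtain P where P: "\<And>k u. f k u = poly (P k) u" by metis
  show ?thesis by (intro exI[of _ "sum P A"]) (simp add: P poly_sum)
qed

lemma G_poly: "\<exists>p. \<forall>u. G s m u = poly p u"
  unfolding G_def
proof (rule poly_sum_ex)
  fix k
  obtain p1 where p1: "\<forall>u. bc (- of_int k + 1 * u) k = poly p1 u" using bc_poly by blast
  obtain p2 where p2: "\<forall>u. bc ((s + of_int k) + (-1) * u) (m - k) = poly p2 u" using bc_poly by blast
  show "\<exists>p. \<forall>u. bc (u - of_int k) k * bc (s - u + of_int k) (m - k) = poly p u"
    by (intro exI[of _ "p1 * p2"]) (use p1 p2 in \<open>auto simp: algebra_simps\<close>)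
qed

lemma G_const: "G s m u = G s m 0"
proof -
  obtain p where p: "\<And>u. G s m u = poly p u" using G_poly by blast
  define q where "q = p - [:G s m 0:]"
  have "q = 0"
  proof (rule ccontr)
    assume "q \<noteq> 0"
    then have "finite {x. poly q x = 0}" by (rule poly_roots_finite)
    moreover have "range real \<subseteq> {x. poly q x = 0}"
      using G_shift_nat[of s m 0 ] by (auto simp: q_def p[symmetric])
    moreover have "infinite (range real)" by (rule range_inj_infinite) (simp add: inj_on_def)
    ultimately show False using finite_subset by blast
  qed
  then show ?thesis using p[of u] by (simp add: q_def)
qed

lemma bc_vdm: "bc (z + real j) q = (\<Sum>r\<le>j. real (j choose r) * bc z (q - int r))"
proof (cases "q < 0")
  case True then show ?thesis by simp
next
  case False
  define n where "n = nat q"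
  have q: "q = int n" using False n_def by simp
  have "bc (z + real j) q = (real j + z) gchoose n" by (simp add: bc_def q add.commute)
  also have "\<dots> = (\<Sum>k\<in>{0..n}. (real j gchoose k) * (z gchoose (n - k)))"
    by (rule gbinomial_Vandermonde[symmetric])
  also have "\<dots> = (\<Sum>k\<in>{..n}. real (j choose k) * bc z (q - int k))"
    by (rule sum.cong) (auto simp: q bc_def binomial_gbinomial nat_diff_distrib)
  also have "\<dots> = (\<Sum>k\<in>{..n+j}. real (j choose k) * bc z (q - int k))"
    by (rule sum.mono_neutral_right[symmetric]) (auto simp: q)
  also have "\<dots> = (\<Sum>k\<in>{..j}. real (j choose k) * bc z (q - int k))"
    by (rule sum.mono_neutral_right) auto
  finally show ?thesis .
qed

lemma lpoly_G: "lpoly i j x = G (real i - 1) (int (i - j)) ((real i - 1)/2 + x)"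
  unfolding lpoly_def G_def
proof (rule sum.reindex_bij_witness[of _ nat int])
  fix k assume k: "k \<in> {0..i - j}"
  have e: "real i - 1 - ((real i - 1) / 2 + x) + real_of_int (int k) = (real i - 1) / 2 + real k - x"
    by simp
  have e3: "int (i - j) - int k = int (i - j - k)" using k by auto
  show "bc ((real i - 1) / 2 + x - real_of_int (int k)) (int k) * bc (real i - 1 - ((real i - 1) / 2 + x) + real_of_int (int k)) (int (i - j) - int k) =
     ((real i - 1) / 2 + x - real k gchoose k) * ((real i - 1) / 2 + real k - x gchoose (i - j - k))"
    unfolding e e3 by (simp add: bc_def)
qed auto

lemma lcoef_G: "lcoef i j = G (real i - 1) (int (i - j)) u"
  unfolding lcoef_def lpoly_G by (metis G_const)

lemma main_id: "Mmat i j = (\<Sum>k\<le>i. Lmat i k * Umat k j)"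
proof -
  define s where "s = real i - 1"
  let ?F = "\<lambda>r. real (j choose r) * G s (int i - int r) 0"
  have "Mmat i j = G (s + real j) (int i) (0 + real j)"
    unfolding Mmat_def s_def by (simp add: lcoef_G[of _ _ "real j"] algebra_simps)
  also have "\<dots> = (\<Sum>q\<in>{0..int i}. (\<Sum>r\<le>j. real (j choose r) * bc (0 - of_int q) (q - int r)) * bc (s - 0 + of_int q) (int i - q))"
    unfolding G_def by (rule sum.cong) (auto simp: bc_vdm[symmetric] algebra_simps)
  also have "\<dots> = (\<Sum>r\<le>j. real (j choose r) * (\<Sum>q\<in>{0..int i}. bc (0 - of_int q) (q - int r) * bc (s - 0 + of_int q) (int i - q)))"
    by (simp add: sum_distrib_left sum_distrib_right sum.swap[of _ "{0..int i}"] mult.assoc)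
  also have "\<dots> = (\<Sum>r\<le>j. ?F r)"
  proof (rule sum.cong[OF refl])
    fix r assume "r \<in> {..j}"
    have "G s (int i - int r) (0 - real r) = (\<Sum>k\<in>{- int r..int i - int r}. bc (0 - real r - of_int k) k * bc (s - (0 - real r) + of_int k) (int i - int r - k))"
      by (rule G_ext) auto
    also have "\<dots> = (\<Sum>q\<in>{0..int i}. bc (0 - of_int q) (q - int r) * bc (s - 0 + of_int q) (int i - q))"
      by (subst sum_int_shift[where c = "- int r"]) (auto simp: algebra_simps intro!: sum.cong)
    finally show "real (j choose r) * (\<Sum>q\<in>{0..int i}. bc (0 - of_int q) (q - int r) * bc (s - 0 + of_int q) (int i - q)) = ?F r"
      by (metis G_const)
  qed
  also have "\<dots> = (\<Sum>r\<le>i+j. ?F r)"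
    by (rule sum.mono_neutral_right[symmetric]) auto
  also have "\<dots> = (\<Sum>r\<le>i. ?F r)"
    by (rule sum.mono_neutral_right) (auto simp: G_neg)
  also have "\<dots> = (\<Sum>k\<le>i. Lmat i k * Umat k j)"
    by (rule sum.cong) (auto simp: Lmat_def Umat_def lcoef_G[of i _ 0] s_def of_nat_diff)
  finally show ?thesis .
qed

lemma M_LU: "mat n n (\<lambda>(i, j). Mmat i j) = mat n n (\<lambda>(i, j). Lmat i j) * mat n n (\<lambda>(i, j). Umat i j)"
proof (rule eq_matI)
  fix i j assume ij: "i < dim_row (mat n n (\<lambda>(i, j). Lmat i j) * mat n n (\<lambda>(i, j). Umat i j))"
     "j < dim_col (mat n n (\<lambda>(i, j). Lmat i j) * mat n n (\<lambda>(i, j). Umat i j))"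
  then have i: "i < n" and j: "j < n" by auto
  have "(mat n n (\<lambda>(i, j). Lmat i j) * mat n n (\<lambda>(i, j). Umat i j)) $$ (i, j) = (\<Sum>k\<in>{0..<n}. Lmat i k * Umat k j)"
    using i j by (simp add: scalar_prod_def)
  also have "\<dots> = (\<Sum>k\<le>i. Lmat i k * Umat k j)"
    by (rule sum.mono_neutral_right) (use i in \<open>auto simp: Lmat_def\<close>)
  finally show "mat n n (\<lambda>(i, j). Mmat i j) $$ (i, j) = (mat n n (\<lambda>(i, j). Lmat i j) * mat n n (\<lambda>(i, j). Umat i j)) $$ (i, j)"
    using i j main_id by simp
qed auto

lemma det_M: "det (mat n n (\<lambda>(i, j). Mmat i j)) = 1"
proof -
  have dL: "det (mat n n (\<lambda>(i, j). Lmat i j)) = 1"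
    by (subst det_lower_triangular[of n]) (auto simp: Lmat_def prod_list_diag_prod lcoef_G[of _ _ 0] G_0)
  have dU: "det (mat n n (\<lambda>(i, j). Umat i j)) = 1"
    by (subst det_upper_triangular[of _ n]) (auto simp: upper_triangular_def Umat_def prod_list_diag_prod)
  show ?thesis unfolding M_LU by (subst det_mult[of _ n]) (auto simp: dL dU)
qed

theorem proposition4p5:
  shows "(\<forall>i j. Mmat i j = (\<Sum>k\<le>i. Lmat i k * Umat k j))
       \<and> (\<forall>n::nat. n \<ge> 1 \<longrightarrow> det (mat n n (\<lambda>(i, j). Mmat i j)) = 1)"
  using main_id det_M by blast
end
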